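(* For every $n\in\mathbb{N}$, \[ \mathcal{M}^{(2)}(n)=\min_{1\le s\le t\le n}\mathcal{M}^{(2)}(n,s,t)=\Bigl\lfloor\frac{n^2-10n+33}{44}\Bigr\rfloor, \] i.e. this is the minimal number of monochromatic generalized Schur triples $(x,y,x+2y)$ attainable under a $2$-coloring of $\{1,\dots,n\}$ of the form $R^sB^{t-s}R^{n-t}$.
   Context: For real $a>0$ and integers $1\le s\le t\le n$, $\mathcal{M}^{(a)}(n,s,t)$ is the number of ordered triples $T=(x,y,x+\lfloor ay\rfloor)\in\{1,\dots,n\}^3$ such that $T\in(\{1,\dots,s\}\cup\{t+1,\dots,n\})^3$ or $T\in\{s+1,\dots,t\}^3$ (i.e. monochromatic triples under the coloring $R^sB^{t-s}R^{n-t}$, which colors $1..s$ and $t+1..n$ red and $s+1..t$ blue). *)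

theory Defs
  imports Complex_Main
begin

definition red_set :: "nat \<Rightarrow> nat \<Rightarrow> nat \<Rightarrow> int set" where
  "red_set n s t = {1..int s} \<union> {int t + 1..int n}"

definition blue_set :: "nat \<Rightarrow> nat \<Rightarrow> int set" where
  "blue_set s t = {int s + 1..int t}"

definition Mcount :: "real \<Rightarrow> nat \<Rightarrow> nat \<Rightarrow> nat \<Rightarrow> nat" where
  "Mcount a n s t = card {(x :: int, y :: int, z :: int).
      x \<in> {1..int n} \<and> y \<in> {1..int n} \<and> z \<in> {1..int n} \<and>
      z = x + \<lfloor>a * real_of_int y\<rfloor> \<and>
      ((x \<in> red_set n s t \<and> y \<in> red_set n s t \<and> z \<in> red_set n s t) \<or>
       (x \<in> blue_set s t \<and> y \<in> blue_set s t \<and> z \<in> blue_set s t))}"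

end

theory Submission
  imports Defs
begin


lemma r1:
 fixes s t n :: int
 assumes "1 \<le> s" "s \<le> t" "t \<le> n" "n - t \<le> 2*s+1" "0 \<le> t - 3*s"
 shows "n^2 - 10*n - 8 \<le> 11*(s*(s-2) + (n-t)*(n-t-2) + (t-3*s)*(t-3*s-2))"
proof -
  define u where "u = s - 1"
  define v where "v = t - 3*s - 1"
  define w where "w = n - t - 1"
  have n: "n = 3*u+v+w+5" unfolding u_def v_def w_def by simp
  have "0 \<le> (3*v-u)^2 + (3*w-u)^2 + (v-w)^2" by simp
  then show ?thesis unfolding n u_def[symmetric] v_def[symmetric] w_def[symmetric]
    apply (simp add: u_def v_def w_def power2_eq_square algebra_simps)
    done
qed

lemma r2:
 fixes s t n :: int
 assumes "1 \<le> s" "s \<le> t" "t \<le> n" "n - t \<le> 2*s+1" "t - 3*s < 0" "11 \<le> n"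
 shows "n^2 - 10*n - 10 \<le> 11*(s*(s-2) + (n-t)*(n-t-2))"
proof -
  have P: "n - 3 \<le> 3*s+(n-t)-4" using assms by linarith
  have A: "(n-3)*(n-3) \<le> (3*s+(n-t)-4)*(3*s+(n-t)-4)" using P assms
    by (intro mult_mono) auto
  have C: "0 \<le> ((s-1) - 3*(n-t-1))^2" by simp
  have N: "0 \<le> n*n + 34*n - 21" using assms by (smt (verit) mult_nonneg_nonneg)
  have eq: "10*(11*(s*(s-2) + (n-t)*(n-t-2))) - 10*(n^2-10*n-10) = 
     11*((3*s+(n-t)-4)*(3*s+(n-t)-4) - (n-3)*(n-3)) + 11*((s-1) - 3*(n-t-1))^2 + (n*n + 34*n - 21)"
    by (simp add: algebra_simps power2_eq_square)
  show ?thesis using A C N eq by (smt (verit))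
qed



lemma aux: "(k::int) * (X - Y) = R \<Longrightarrow> 0 \<le> R \<Longrightarrow> 0 < k \<Longrightarrow> Y \<le> X"
  by (smt (verit) mult_pos_neg)

lemma r3a:
 fixes s t n :: int
 assumes "1 \<le> s" "s \<le> t" "t \<le> n" "2*s+2 \<le> n-t" "0 \<le> t - 3*s" "0 \<le> n-3*t"
 shows "n^2 - 10*n - 10 \<le> 11*(s*(s-2) + 4*s*(n-t-s-1) + (t-3*s)*(t-3*s-2) + (n-3*t)*(n-3*t-2))"
proof -
  define p where "p = t - 3*s"
  define q where "q = n - 3*t"
  have eq: "2*(11*(s*(s-2) + 4*s*(n-t-s-1) + (t-3*s)*(t-3*s-2) + (n-3*t)*(n-3*t-2)) - (n^2 - 10*n - 10))
    = (2*p-3*q)^2+11*q*q+300*s*s+68*s*p+52*(s-1)*q+28*q+48*s+16*p+20"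
    unfolding p_def q_def by (simp add: algebra_simps power2_eq_square)
  have "0 \<le> (2*p-3*q)^2+11*q*q+300*s*s+68*s*p+52*(s-1)*q+28*q+48*s+16*p+20"
    using assms unfolding p_def[symmetric] q_def[symmetric]
    by (intro add_nonneg_nonneg mult_nonneg_nonneg) auto
  then show ?thesis by (rule aux[OF eq]) simp_all
qed

lemma r3b:
 fixes s t n :: int
 assumes "1 \<le> s" "s \<le> t" "t \<le> n" "2*s+2 \<le> n-t" "t - 3*s < 0" "0 \<le> n-3*t"
 shows "n^2 - 10*n - 10 \<le> 11*(s*(s-2) + 4*s*(n-t-s-1) + (n-3*t)*(n-3*t-2))"
proof -
  define b where "b = t - s"
  define q where "q = n - 3*t"
  have eq: "1*(11*(s*(s-2) + 4*s*(n-t-s-1) + (n-3*t)*(n-3*t-2)) - (n^2 - 10*n - 10))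
    = 9*b*(2*s-b)+6*q*(2*s-b)+46*s*(s-1)+10*s+52*s*b+30*b+26*(s-1)*q+14*q+10*q*q+10"
    unfolding b_def q_def by (simp add: algebra_simps power2_eq_square)
  have "0 \<le> 9*b*(2*s-b)+6*q*(2*s-b)+46*s*(s-1)+10*s+52*s*b+30*b+26*(s-1)*q+14*q+10*q*q+10"
    using assms unfolding b_def[symmetric] q_def[symmetric]
    by (intro add_nonneg_nonneg mult_nonneg_nonneg) (auto simp: b_def q_def)
  then show ?thesis by (rule aux[OF eq]) simp_all
qed

lemma r3c:
 fixes s t n :: int
 assumes "1 \<le> s" "s \<le> t" "t \<le> n" "2*s+2 \<le> n-t" "0 \<le> t - 3*s" "n-3*t < 0"
 shows "n^2 - 10*n - 10 \<le> 11*(s*(s-2) + 4*s*(n-t-s-1) + (t-3*s)*(t-3*s-2))"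
proof -
  define p where "p = t - 3*s"
  define g where "g = n - t - 2*s - 2"
  define de where "de = 4*s+2*p-3-g"
  have gp: "0 \<le> g" "0 \<le> de" "0 \<le> p" using assms by (auto simp: g_def de_def p_def)
  show ?thesis
  proof (cases "0 \<le> 30*s-4*p+9")
    case True
    define k where "k = 30*s-4*p+9"
    have "0 \<le> k" using True k_def by simp
    have eq: "1*(11*(s*(s-2) + 4*s*(n-t-s-1) + (t-3*s)*(t-3*s-2)) - (n^2 - 10*n - 10))
      = g*de + (5*(s-p)^2+25*s*s+5*(p-2)^2+52*s+4*p+6) + g*k"
      unfolding k_def de_def g_def p_def by (simp add: algebra_simps power2_eq_square)
    have "0 \<le> g*de + (5*(s-p)^2+25*s*s+5*(p-2)^2+52*s+4*p+6) + g*k"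
      using assms gp \<open>0 \<le> k\<close>
      by (intro add_nonneg_nonneg mult_nonneg_nonneg) auto
    then show ?thesis by (rule aux[OF eq]) simp_all
  next
    case False
    define k where "k = 4*p-30*s-9"
    have "0 \<le> k" using False k_def by simp
    have eq: "1*(11*(s*(s-2) + 4*s*(n-t-s-1) + (t-3*s)*(t-3*s-2)) - (n^2 - 10*n - 10))
      = g*de + (150*s*(s-1)+34*s*p+2*p*p+(148*s-1)+14*p) + de*k"
      unfolding k_def de_def g_def p_def by (simp add: algebra_simps power2_eq_square)
    have "0 \<le> g*de + (150*s*(s-1)+34*s*p+2*p*p+(148*s-1)+14*p) + de*k"
      using assms gp \<open>0 \<le> k\<close>
      by (intro add_nonneg_nonneg mult_nonneg_nonneg) auto
    then show ?thesis by (rule aux[OF eq]) simp_all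
  qed
qed

lemma r3d:
 fixes s t n :: int
 assumes "1 \<le> s" "s \<le> t" "t \<le> n" "2*s+2 \<le> n-t" "t - 3*s < 0" "n-3*t < 0"
 shows "n^2 - 10*n - 10 \<le> 11*(s*(s-2) + 4*s*(n-t-s-1))"
proof -
  define x where "x = 2*s-1-(t-s)"
  define y where "y = n-t-2*s-2"
  define z where "z = 2*s+2*(t-s)-1-(n-t)"
  have xyz: "0 \<le> x" "0 \<le> y" "0 \<le> z" using assms by (auto simp: x_def y_def z_def)
  have eq: "2*(11*(s*(s-2) + 4*s*(n-t-s-1)) - (n^2 - 10*n - 10))
    = 2*y*z+x*z+9*x*y+60*s*s+124*s+38+60*s*y+26*y+16*(s-1)*x+5*x"
    unfolding x_def y_def z_def by (simp add: algebra_simps power2_eq_square)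
  have "0 \<le> 2*y*z+x*z+9*x*y+60*s*s+124*s+38+60*s*y+26*y+16*(s-1)*x+5*x"
    using assms xyz by (intro add_nonneg_nonneg mult_nonneg_nonneg) auto
  then show ?thesis by (rule aux[OF eq]) simp_all
qed



lemma ub_arith:
  fixes u v w :: int
  assumes d: "v - w = 0 \<or> v - w = 1" and e1: "-4 \<le> 3*v+3*w-2*u" and e2: "3*v+3*w-2*u \<le> 6"
  shows "11*((u^2 - (if odd u then 1 else 0)) + (v^2 - (if odd v then 1 else 0)) + (w^2 - (if odd w then 1 else 0)))
         \<le> (3*u+v+w)^2 + 8"
proof -
  define e where "e = 3*v+3*w-2*u"
  define dd where "dd = v - w"
  define Oc where "Oc = (if odd u then 1 else 0) + (if odd v then 1 else 0) + (if odd w then (1::int) else 0)"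
  have Oc0: "0 \<le> Oc" unfolding Oc_def by auto
  have id: "2*(11*(u^2+v^2+w^2) - (3*u+v+w)^2) = e^2 + 11*dd^2"
    unfolding e_def dd_def by (simp add: algebra_simps power2_eq_square)
  have goal: "e^2 + 11*dd^2 \<le> 16 + 22*Oc"
  proof (cases "dd = 1")
    case True
    then have "odd v \<or> odd w" unfolding dd_def by presburger
    then have "1 \<le> Oc" unfolding Oc_def by auto
    have "odd e" using True unfolding e_def dd_def by presburger
    then have "e = -3 \<or> e = -1 \<or> e = 1 \<or> e = 3 \<or> e = 5" using e1 e2 unfolding e_def[symmetric] by presburger
    then have "e^2 \<le> 25" by auto
    then show ?thesis using True \<open>1 \<le> Oc\<close> by simp
  next
    case False
    then have dd0: "dd = 0" using d unfolding dd_def by auto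
    have "even e" using dd0 unfolding e_def dd_def by presburger
    then have "e = -4 \<or> e = -2 \<or> e = 0 \<or> e = 2 \<or> e = 4 \<or> e = 6" using e1 e2 unfolding e_def[symmetric] by presburger
    then show ?thesis
    proof (elim disjE)
      assume "e = 6"
      then have "odd u \<or> odd w" using dd0 unfolding e_def dd_def by presburger
      then have "1 \<le> Oc" unfolding Oc_def by auto
      then show ?thesis using dd0 \<open>e = 6\<close> by simp
    qed (use dd0 Oc0 in auto)
  qed
  have "11*((u^2 - (if odd u then 1 else 0)) + (v^2 - (if odd v then 1 else 0)) + (w^2 - (if odd w then 1 else 0)))
     = 11*(u^2+v^2+w^2) - 11*Oc" unfolding Oc_def by simp
  then show ?thesis using id goal by (smt (verit))
qed



fun H :: "int \<Rightarrow> nat \<Rightarrow> int" where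
  "H m 0 = 0"
| "H m (Suc Y) = H m Y + max 0 (m - 2*(int Y + 1))"

lemma H_nonneg: "0 \<le> H m Y"
  by (induction Y) auto

lemma H_a: "2*int Y + 1 \<le> m \<Longrightarrow> H m Y = int Y * (m - int Y - 1)"
proof (induction Y)
  case 0 then show ?case by simp
next
  case (Suc Y)
  then have "H m Y = int Y * (m - int Y - 1)" by simp
  moreover have "max 0 (m - 2*(int Y + 1)) = m - 2*(int Y + 1)" using Suc.prems by simp
  ultimately show ?case by (simp add: algebra_simps)
qed

lemma H_b: "0 \<le> m \<Longrightarrow> m \<le> 2*int Y + 1 \<Longrightarrow> 4 * H m Y = (m-1)^2 - (if even m then 1 else 0)"
proof (induction Y)
  case 0
  then have "m = 0 \<or> m = 1" by auto
  then show ?case by auto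
next
  case (Suc Y)
  show ?case
  proof (cases "m \<le> 2*int Y + 1")
    case True
    then show ?thesis using Suc by simp
  next
    case False
    then have m: "m = 2*int Y + 2 \<or> m = 2*int Y + 3" using Suc.prems by auto
    have a: "H m Y = int Y * (m - int Y - 1)" using False by (intro H_a) simp
    from m show ?thesis
    proof
      assume m: "m = 2*int Y + 2"
      then show ?thesis using a by (simp add: algebra_simps power2_eq_square)
    next
      assume m: "m = 2*int Y + 3"
      have "odd m" using m by presburger
      then show ?thesis using a m by (simp add: algebra_simps power2_eq_square)
    qed
  qed
qed

lemma int_nat_H: "int (nat (H m Y)) = H m Y"
  using H_nonneg[of m Y] by simp

definition PP :: "int \<Rightarrow> nat \<Rightarrow> (int \<times> int) set" where
  "PP m Y = {(x,y). 0 < x \<and> 0 < y \<and> y \<le> int Y \<and> x + 2*y \<le> m}"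

lemma PP_card: "finite (PP m Y) \<and> card (PP m Y) = nat (H m Y)"
proof (induction Y)
  case 0
  have "PP m 0 = {}" unfolding PP_def by auto
  then show ?case by simp
next
  case (Suc Y)
  have eq: "PP m (Suc Y) = PP m Y \<union> ({1..m - 2*(int Y + 1)} \<times> {int Y + 1})"
    unfolding PP_def by auto
  have disj: "PP m Y \<inter> ({1..m - 2*(int Y + 1)} \<times> {int Y + 1}) = {}"
    unfolding PP_def by auto
  have c2: "card ({1..m - 2*(int Y + 1)} \<times> {int Y + 1}) = nat (max 0 (m - 2*(int Y + 1)))"
    by (simp add: card_cartesian_product)
  have "card (PP m (Suc Y)) = card (PP m Y) + card ({1..m - 2*(int Y + 1)} \<times> {int Y + 1})"
    unfolding eq using Suc.IH disj by (intro card_Un_disjoint) auto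
  also have "\<dots> = nat (H m Y) + nat (max 0 (m - 2*(int Y + 1)))" using Suc.IH c2 by simp
  also have "\<dots> = nat (H m (Suc Y))" using H_nonneg[of m Y] by (simp add: nat_add_distrib)
  finally show ?case using eq Suc.IH by simp
qed

definition Fam :: "int \<Rightarrow> int \<Rightarrow> nat \<Rightarrow> int \<Rightarrow> (int \<times> int \<times> int) set" where
  "Fam al be Y h = {(x,y,z). al < x \<and> be < y \<and> y \<le> be + int Y \<and> z = x + 2*y \<and> z \<le> h}"

lemma Fam_card: "finite (Fam al be Y h) \<and> card (Fam al be Y h) = nat (H (h - al - 2*be) Y)"
proof -
  let ?f = "\<lambda>(x,y). (x + al, y + be, x + al + 2*(y + be))"
  have eq: "Fam al be Y h = ?f ` PP (h - al - 2*be) Y"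
  proof (rule set_eqI, rule iffI)
    fix p assume "p \<in> Fam al be Y h"
    then obtain x y z where p: "p = (x,y,z)" "al < x" "be < y" "y \<le> be + int Y" "z = x + 2*y" "z \<le> h"
      unfolding Fam_def by auto
    then have "(x - al, y - be) \<in> PP (h - al - 2*be) Y" unfolding PP_def by auto
    moreover have "p = ?f (x - al, y - be)" using p by simp
    ultimately show "p \<in> ?f ` PP (h - al - 2*be) Y" by blast
  next
    fix p assume "p \<in> ?f ` PP (h - al - 2*be) Y"
    then show "p \<in> Fam al be Y h" unfolding PP_def Fam_def by auto
  qed
  have inj: "inj_on ?f (PP (h - al - 2*be) Y)" by (auto simp: inj_on_def)
  show ?thesis unfolding eq using PP_card[of "h - al - 2*be" Y] inj
    by (simp add: card_image)
qed


definition S :: "nat \<Rightarrow> nat \<Rightarrow> nat \<Rightarrow> (int \<times> int \<times> int) set" where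
  "S n s t = {(x,y,z). 1 \<le> x \<and> x \<le> int n \<and> 1 \<le> y \<and> y \<le> int n \<and> 1 \<le> z \<and> z \<le> int n \<and> z = x + 2*y \<and>
     ((x \<in> red_set n s t \<and> y \<in> red_set n s t \<and> z \<in> red_set n s t) \<or>
       (x \<in> blue_set s t \<and> y \<in> blue_set s t \<and> z \<in> blue_set s t))}"

lemma floor2: "\<lfloor>2 * real_of_int y\<rfloor> = 2 * y"
proof -
  have "2 * real_of_int y = real_of_int (2*y)" by simp
  then show ?thesis by (simp only: floor_of_int)
qed

lemma Mcount_S: "Mcount 2 n s t = card (S n s t)"
  unfolding Mcount_def S_def floor2 by (simp add: atLeastAtMost_iff)

lemma S_finite: "finite (S n s t)"
proof -
  have "S n s t \<subseteq> {1..int n} \<times> {1..int n} \<times> {1..int n}" unfolding S_def by auto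
  then show ?thesis by (rule finite_subset) auto
qed

lemma lower:
  assumes "1 \<le> s" "s \<le> t" "t \<le> n"
  shows "H (int s) s + H (int n - int t) s + H (int t - 3*int s) (nat (int t - 3*int s))
         + H (int n - 3*int t) (nat (int n - 3*int t)) \<le> int (card (S n s t))"
proof -
  define F1 where "F1 = Fam 0 0 s (int s)"
  define F2 where "F2 = Fam (int t) 0 s (int n)"
  define F3 where "F3 = Fam (int s) (int s) (nat (int t - 3*int s)) (int t)"
  define F4 where "F4 = Fam (int t) (int t) (nat (int n - 3*int t)) (int n)"
  have c1: "finite F1" "card F1 = nat (H (int s) s)" unfolding F1_def using Fam_card[of 0 0 s "int s"] by auto
  have c2: "finite F2" "card F2 = nat (H (int n - int t) s)" unfolding F2_def using Fam_card[of "int t" 0 s "int n"] by auto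
  have c3: "finite F3" "card F3 = nat (H (int t - 3*int s) (nat (int t - 3*int s)))"
    unfolding F3_def using Fam_card[of "int s" "int s" "nat (int t - 3*int s)" "int t"] by auto
  have c4: "finite F4" "card F4 = nat (H (int n - 3*int t) (nat (int n - 3*int t)))"
    unfolding F4_def using Fam_card[of "int t" "int t" "nat (int n - 3*int t)" "int n"] by auto
  have sub: "F1 \<union> F2 \<union> F3 \<union> F4 \<subseteq> S n s t"
  proof (intro Un_least subsetI)
    fix p assume "p \<in> F1"
    then obtain x y z where p: "p = (x,y,z)" "0 < x" "0 < y" "z = x + 2*y" "z \<le> int s"
      unfolding F1_def Fam_def by auto
    then show "p \<in> S n s t" using assms unfolding S_def red_set_def by simp
  next
    fix p assume "p \<in> F2"
    then obtain x y z where p: "p = (x,y,z)" "int t < x" "0 < y" "y \<le> int s" "z = x + 2*y" "z \<le> int n"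
      unfolding F2_def Fam_def by auto
    then show "p \<in> S n s t" using assms unfolding S_def red_set_def by simp
  next
    fix p assume "p \<in> F3"
    then obtain x y z where p: "p = (x,y,z)" "int s < x" "int s < y" "z = x + 2*y" "z \<le> int t"
      unfolding F3_def Fam_def by auto
    then show "p \<in> S n s t" using assms unfolding S_def blue_set_def by simp
  next
    fix p assume "p \<in> F4"
    then obtain x y z where p: "p = (x,y,z)" "int t < x" "int t < y" "z = x + 2*y" "z \<le> int n"
      unfolding F4_def Fam_def by auto
    then show "p \<in> S n s t" using assms unfolding S_def red_set_def by simp
  qed
  have d12: "F1 \<inter> F2 = {}" using assms unfolding F1_def F2_def Fam_def by fastforce
  have d3: "(F1 \<union> F2) \<inter> F3 = {}" using assms unfolding F1_def F2_def F3_def Fam_def by fastforce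
  have d4: "(F1 \<union> F2 \<union> F3) \<inter> F4 = {}" using assms unfolding F1_def F2_def F3_def F4_def Fam_def by fastforce
  have "card (F1 \<union> F2 \<union> F3 \<union> F4) = card F1 + card F2 + card F3 + card F4"
    using c1 c2 c3 c4 d12 d3 d4 by (simp add: card_Un_disjoint)
  moreover have "card (F1 \<union> F2 \<union> F3 \<union> F4) \<le> card (S n s t)"
    using sub S_finite by (rule card_mono[rotated])
  ultimately have "nat (H (int s) s) + nat (H (int n - int t) s) + nat (H (int t - 3*int s) (nat (int t - 3*int s)))
         + nat (H (int n - 3*int t) (nat (int n - 3*int t))) \<le> card (S n s t)"
    using c1 c2 c3 c4 by simp
  then have "int (nat (H (int s) s) + nat (H (int n - int t) s) + nat (H (int t - 3*int s) (nat (int t - 3*int s)))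
         + nat (H (int n - 3*int t) (nat (int n - 3*int t)))) \<le> int (card (S n s t))"
    by (simp only: of_nat_le_iff)
  then show ?thesis by (simp only: of_nat_add int_nat_H)
qed

lemma upper:
  assumes "1 \<le> s" "3*int s \<le> int t" "t \<le> n" "int n \<le> 2*int t + 2" "int n - int t \<le> 2*int s + 1"
  shows "int (card (S n s t)) \<le> H (int s) s + H (int n - int t) s + H (int t - 3*int s) (nat (int t - 3*int s))"
proof -
  define F1 where "F1 = Fam 0 0 s (int s)"
  define F2 where "F2 = Fam (int t) 0 s (int n)"
  define F3 where "F3 = Fam (int s) (int s) (nat (int t - 3*int s)) (int t)"
  have c1: "finite F1" "card F1 = nat (H (int s) s)" unfolding F1_def using Fam_card[of 0 0 s "int s"] by auto
  have c2: "finite F2" "card F2 = nat (H (int n - int t) s)" unfolding F2_def using Fam_card[of "int t" 0 s "int n"] by auto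
  have c3: "finite F3" "card F3 = nat (H (int t - 3*int s) (nat (int t - 3*int s)))"
    unfolding F3_def using Fam_card[of "int s" "int s" "nat (int t - 3*int s)" "int t"] by auto
  have sub: "S n s t \<subseteq> F1 \<union> F2 \<union> F3"
  proof
    fix p assume "p \<in> S n s t"
    then obtain x y z where p: "p = (x,y,z)" "1 \<le> x" "x \<le> int n" "1 \<le> y" "y \<le> int n" "1 \<le> z" "z \<le> int n" "z = x + 2*y"
      and col: "(x \<in> red_set n s t \<and> y \<in> red_set n s t \<and> z \<in> red_set n s t) \<or>
       (x \<in> blue_set s t \<and> y \<in> blue_set s t \<and> z \<in> blue_set s t)"
      unfolding S_def by auto
    from col show "p \<in> F1 \<union> F2 \<union> F3"
    proof
      assume r: "x \<in> red_set n s t \<and> y \<in> red_set n s t \<and> z \<in> red_set n s t"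
      then have ys: "y \<le> int s" using p assms unfolding red_set_def by auto
      show ?thesis
      proof (cases "x \<le> int s")
        case True
        then have "z \<le> int s" using r p ys assms unfolding red_set_def by auto
        then have "p \<in> F1" using p ys unfolding F1_def Fam_def by auto
        then show ?thesis by blast
      next
        case False
        then have "int t < x" using r unfolding red_set_def by auto
        then have "p \<in> F2" using p ys unfolding F2_def Fam_def by auto
        then show ?thesis by blast
      qed
    next
      assume b: "x \<in> blue_set s t \<and> y \<in> blue_set s t \<and> z \<in> blue_set s t"
      then have "p \<in> F3" using p assms unfolding blue_set_def F3_def Fam_def by auto
      then show ?thesis by blast
    qed
  qed
  have "card (S n s t) \<le> card (F1 \<union> F2 \<union> F3)"
    using sub c1 c2 c3 by (intro card_mono) auto
  also have "\<dots> \<le> card F1 + card F2 + card F3"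
    by (meson add_le_mono card_Un_le le_trans order_refl)
  finally have "card (S n s t) \<le> nat (H (int s) s) + nat (H (int n - int t) s) + nat (H (int t - 3*int s) (nat (int t - 3*int s)))"
    using c1 c2 c3 by simp
  then have "int (card (S n s t)) \<le> int (nat (H (int s) s) + nat (H (int n - int t) s) + nat (H (int t - 3*int s) (nat (int t - 3*int s))))"
    by (simp only: of_nat_le_iff)
  then show ?thesis by (simp only: of_nat_add int_nat_H)
qed

lemma lower_arith:
  fixes s t n A B E D :: int
  assumes st: "1 \<le> s" "s \<le> t" "t \<le> n" "11 \<le> n"
  and A: "s*(s-2) \<le> 4*A"
  and B1: "n-t \<le> 2*s+1 \<Longrightarrow> (n-t)*(n-t-2) \<le> 4*B"
  and B2: "2*s+1 \<le> n-t \<Longrightarrow> B = s*(n-t-s-1)"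
  and E: "0 \<le> t-3*s \<Longrightarrow> (t-3*s)*(t-3*s-2) \<le> 4*E" "0 \<le> E"
  and D: "0 \<le> n-3*t \<Longrightarrow> (n-3*t)*(n-3*t-2) \<le> 4*D" "0 \<le> D"
  shows "n^2 - 10*n - 10 \<le> 44*(A+B+E+D)"
proof (cases "n-t \<le> 2*s+1")
  case True
  note B = B1[OF True]
  show ?thesis
  proof (cases "0 \<le> t-3*s")
    case True2: True
    have "n^2 - 10*n - 8 \<le> 11*(s*(s-2) + (n-t)*(n-t-2) + (t-3*s)*(t-3*s-2))"
      using r1[OF st(1-3) True True2] .
    then show ?thesis using A B E(1)[OF True2] D(2) by (smt (verit))
  next
    case False
    have "n^2 - 10*n - 10 \<le> 11*(s*(s-2) + (n-t)*(n-t-2))"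
      using r2[OF st(1-3) True _ st(4)] False by simp
    then show ?thesis using A B E(2) D(2) by (smt (verit))
  qed
next
  case False
  then have c: "2*s+2 \<le> n-t" by simp
  have B4: "4*B = 4*s*(n-t-s-1)" using B2 c by simp
  consider "0 \<le> t-3*s" "0 \<le> n-3*t" | "t-3*s < 0" "0 \<le> n-3*t" | "0 \<le> t-3*s" "n-3*t < 0" | "t-3*s < 0" "n-3*t < 0"
    by linarith
  then show ?thesis
  proof cases
    case 1
    then show ?thesis using r3a[OF st(1-3) c 1] A B4 E(1) D(1) by (smt (verit))
  next
    case 2
    then show ?thesis using r3b[OF st(1-3) c 2] A B4 E(2) D(1) by (smt (verit))
  next
    case 3
    then show ?thesis using r3c[OF st(1-3) c 3] A B4 E(1) D(2) by (smt (verit))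
  next
    case 4
    then show ?thesis using r3d[OF st(1-3) c 4] A B4 E(2) D(2) by (smt (verit))
  qed
qed

lemma H_lb: "0 \<le> m \<Longrightarrow> m \<le> 2*int Y + 1 \<Longrightarrow> m*(m-2) \<le> 4 * H m Y"
  using H_b[of m Y] by (simp add: algebra_simps power2_eq_square split: if_splits)

lemma lower_all:
  assumes "1 \<le> s" "s \<le> t" "t \<le> n"
  shows "(int n^2 - 10*int n + 33) div 44 \<le> int (card (S n s t))"
proof -
  let ?X = "int n^2 - 10*int n + 33"
  have X: "44 * (?X div 44) \<le> ?X"
  proof -
    have "?X = 44 * (?X div 44) + ?X mod 44" by simp
    moreover have "0 \<le> ?X mod 44" by simp
    ultimately show ?thesis by linarith
  qed
  show ?thesis
  proof (cases "n \<le> 10")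
    case True
    have "int n * int n \<le> 10 * int n" using True by (intro mult_right_mono) auto
    then have "?X < 44" by (simp add: power2_eq_square)
    then have "?X div 44 \<le> 0" by simp
    then show ?thesis by simp
  next
    case False
    define A where "A = H (int s) s"
    define B where "B = H (int n - int t) s"
    define E where "E = H (int t - 3*int s) (nat (int t - 3*int s))"
    define D where "D = H (int n - 3*int t) (nat (int n - 3*int t))"
    have L: "A + B + E + D \<le> int (card (S n s t))" using lower[OF assms] unfolding A_def B_def E_def D_def .
    have "(int n)^2 - 10*(int n) - 10 \<le> 44*(A+B+E+D)"
    proof (rule lower_arith)
      show "1 \<le> int s" "int s \<le> int t" "int t \<le> int n" "11 \<le> int n" using assms False by auto
      show "int s * (int s - 2) \<le> 4 * A" unfolding A_def by (rule H_lb) auto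
      show "(int n - int t) * (int n - int t - 2) \<le> 4 * B" if "int n - int t \<le> 2 * int s + 1"
        unfolding B_def using that assms by (intro H_lb) auto
      show "B = int s * (int n - int t - int s - 1)" if "2 * int s + 1 \<le> int n - int t"
        unfolding B_def using that by (intro H_a) auto
      show "(int t - 3 * int s) * (int t - 3 * int s - 2) \<le> 4 * E" if "0 \<le> int t - 3 * int s"
        unfolding E_def using that by (intro H_lb) auto
      show "(int n - 3 * int t) * (int n - 3 * int t - 2) \<le> 4 * D" if "0 \<le> int n - 3 * int t"
        unfolding D_def using that by (intro H_lb) auto
      show "0 \<le> E" "0 \<le> D" unfolding E_def D_def by (rule H_nonneg)+
    qed
    then have "?X < 44 * int (card (S n s t)) + 44" using L by (simp add: power2_eq_square)
    then have "?X div 44 < int (card (S n s t)) + 1" using X by linarith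
    then show ?thesis by simp
  qed
qed

lemma H_exact: "0 \<le> m \<Longrightarrow> m \<le> 2*int Y + 1 \<Longrightarrow> 4 * H m Y = (m-1)^2 - (if odd (m-1) then 1 else 0)"
  using H_b[of m Y] by simp

lemma upper_choice:
  assumes "5 \<le> n"
  shows "\<exists>s t. 1 \<le> s \<and> s \<le> t \<and> t \<le> n \<and> int (card (S n s t)) \<le> (int n^2 - 10*int n + 33) div 44"
proof -
  define s where "s = 3*n div 11"
  have s1: "11*s \<le> 3*n" "3*n < 11*s + 11" unfolding s_def by auto
  have s3: "3*s \<le> n" using s1 by linarith
  define c where "c = (n - 3*s) div 2"
  have c1: "2*c \<le> n - 3*s" "n - 3*s \<le> 2*c+1" unfolding c_def by auto
  define t where "t = n - c"
  have ct: "c \<le> n" using c1 by linarith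
  have hs: "1 \<le> s" using s1 assms by linarith
  have ht: "3*int s \<le> int t" "t \<le> n" "int n \<le> 2*int t + 2" "int n - int t \<le> 2*int s + 1" "s \<le> t"
    using s1 c1 s3 ct assms unfolding t_def by linarith+
  have tint: "int t = int n - int c" unfolding t_def using ct by simp
  have s1i: "11*int s \<le> 3*int n" "3*int n < 11*int s + 11" using s1 by linarith+
  have c1i: "2*int c \<le> int n - 3*int s" "int n - 3*int s \<le> 2*int c+1" using c1 s3 by linarith+
  define u where "u = int s - 1"
  define v where "v = int t - 3*int s - 1"
  define w where "w = int n - int t - 1"
  have U: "int (card (S n s t)) \<le> H (int s) s + H (int n - int t) s + H (int t - 3*int s) (nat (int t - 3*int s))"
    using upper[OF hs ht(1-4)] .
  define Iu where "Iu = (if odd u then 1 else 0::int)"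
  define Iv where "Iv = (if odd v then 1 else 0::int)"
  define Iw where "Iw = (if odd w then 1 else 0::int)"
  have 1: "4 * H (int s) s = u^2 - Iu" unfolding u_def Iu_def by (rule H_exact) auto
  have 2: "4 * H (int n - int t) s = w^2 - Iw" unfolding w_def Iw_def using ht by (intro H_exact) auto
  have 3: "4 * H (int t - 3*int s) (nat (int t - 3*int s)) = v^2 - Iv"
    unfolding v_def Iv_def using ht by (intro H_exact) auto
  have ar: "11*((u^2 - Iu) + (v^2 - Iv) + (w^2 - Iw)) \<le> (3*u+v+w)^2 + 8"
    unfolding Iu_def Iv_def Iw_def
  proof (rule ub_arith)
    show "v - w = 0 \<or> v - w = 1" using c1i tint unfolding v_def w_def by linarith
    show "-4 \<le> 3*v+3*w-2*u" using s1i tint unfolding u_def v_def w_def by (simp add: algebra_simps)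
    show "3*v+3*w-2*u \<le> 6" using s1i tint unfolding u_def v_def w_def by (simp add: algebra_simps)
  qed
  have N: "3*u+v+w = int n - 5" unfolding u_def v_def w_def by simp
  have ar2: "11*((u^2 - Iu) + (v^2 - Iv) + (w^2 - Iw)) \<le> (int n - 5)^2 + 8" using ar unfolding N .
  have "44 * int (card (S n s t)) \<le> 44 * (H (int s) s + H (int n - int t) s + H (int t - 3*int s) (nat (int t - 3*int s)))"
    using U by (rule mult_left_mono) simp
  also have "\<dots> = 11 * (4 * H (int s) s + 4 * H (int n - int t) s + 4 * H (int t - 3*int s) (nat (int t - 3*int s)))"
    by simp
  also have "\<dots> = 11*((u^2 - Iu) + (w^2 - Iw) + (v^2 - Iv))" by (simp only: 1 2 3)
  also have "\<dots> \<le> (int n - 5)^2 + 8" using ar2 by (simp add: algebra_simps)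
  finally have "44 * int (card (S n s t)) \<le> (int n - 5)^2 + 8" .
  then have "44 * int (card (S n s t)) \<le> int n^2 - 10*int n + 33" by (simp add: power2_eq_square algebra_simps)
  then have "(44 * int (card (S n s t))) div 44 \<le> (int n^2 - 10*int n + 33) div 44" by (rule zdiv_mono1) simp
  then have "int (card (S n s t)) \<le> (int n^2 - 10*int n + 33) div 44" by simp
  then show ?thesis using hs ht by blast
qed

lemma upper_exists:
  assumes "1 \<le> n"
  shows "\<exists>s t. 1 \<le> s \<and> s \<le> t \<and> t \<le> n \<and> int (card (S n s t)) \<le> (int n^2 - 10*int n + 33) div 44"
proof (cases "5 \<le> n")
  case True then show ?thesis by (rule upper_choice)
next
  case False
  have X: "0 \<le> (int n^2 - 10*int n + 33) div 44"
  proof -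
    have "int n * int n \<le> 10 * int n" using False by (intro mult_right_mono) auto
    have "0 \<le> (int n - 5)^2" by simp
    then have "0 \<le> int n^2 - 10*int n + 33" by (simp add: power2_eq_square algebra_simps)
    then show ?thesis by simp
  qed
  show ?thesis
  proof (cases "3 \<le> n")
    case True
    have U: "int (card (S n 1 3)) \<le> H 1 1 + H (int n - 3) 1 + H 0 (nat 0)"
      using upper[of 1 3 n] True False by simp
    have "H (int n - 3) 1 = 0" using False by (simp add: numeral_eq_Suc)
    then have "int (card (S n 1 3)) \<le> 0" using U by (simp add: numeral_eq_Suc)
    then show ?thesis using X True by (intro exI[of _ 1] exI[of _ 3]) auto
  next
    case False
    have "S n 1 1 = {}" using False unfolding S_def by auto
    then show ?thesis using X assms by (intro exI[of _ 1] exI[of _ 1]) auto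
  qed
qed

theorem theorem4p2:
  fixes n :: nat
  assumes "n \<ge> 1"
  shows "int (Min {Mcount 2 n s t | s t. 1 \<le> s \<and> s \<le> t \<and> t \<le> n})
           = \<lfloor>(real n ^ 2 - 10 * real n + 33) / 44\<rfloor>"
proof -
  let ?K = "{Mcount 2 n s t | s t. 1 \<le> s \<and> s \<le> t \<and> t \<le> n}"
  let ?T = "(int n^2 - 10*int n + 33) div 44"
  have rhs: "\<lfloor>(real n ^ 2 - 10 * real n + 33) / 44\<rfloor> = ?T"
  proof -
    have "(real n ^ 2 - 10 * real n + 33) / 44 = real_of_int (int n^2 - 10*int n + 33) / real_of_int 44"
      by simp
    then show ?thesis by (simp only: floor_divide_of_int_eq)
  qed
  have fin: "finite ?K"
  proof -
    have "?K \<subseteq> (\<lambda>(s,t). Mcount 2 n s t) ` ({0..n} \<times> {0..n})"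
    proof
      fix k assume "k \<in> ?K"
      then obtain s t where "k = Mcount 2 n s t" "s \<le> t" "t \<le> n" by blast
      then show "k \<in> (\<lambda>(s,t). Mcount 2 n s t) ` ({0..n} \<times> {0..n})"
        by (intro image_eqI[of _ _ "(s,t)"]) auto
    qed
    then show ?thesis by (rule finite_subset) auto
  qed
  have lo: "\<forall>k \<in> ?K. ?T \<le> int k"
  proof
    fix k assume "k \<in> ?K"
    then obtain s t where "k = Mcount 2 n s t" "1 \<le> s" "s \<le> t" "t \<le> n" by blast
    then show "?T \<le> int k" using lower_all[of s t n] by (simp only: Mcount_S)
  qed
  obtain s t where st: "1 \<le> s" "s \<le> t" "t \<le> n" "int (card (S n s t)) \<le> ?T"
    using upper_exists[OF assms] by blast
  have kin: "Mcount 2 n s t \<in> ?K" using st by blast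
  have ne: "?K \<noteq> {}" using kin by blast
  have "Min ?K \<in> ?K" using fin ne by (rule Min_in)
  then have m1: "?T \<le> int (Min ?K)" using lo by blast
  have "Min ?K \<le> Mcount 2 n s t" using fin kin by (rule Min_le)
  then have "int (Min ?K) \<le> int (Mcount 2 n s t)" by (simp only: of_nat_le_iff)
  also have "int (Mcount 2 n s t) = int (card (S n s t))" by (simp only: Mcount_S)
  finally have m2: "int (Min ?K) \<le> ?T" using st(4) by linarith
  have "int (Min ?K) = ?T" using m1 m2 by linarith
  then show ?thesis unfolding rhs .
qed


end
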